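(* Let $X$ be a nonempty set and $d:X\times X\to[0,\infty)$ a triangular symmetric on $X$. Let $(x_n;n\ge 0)$ be a sequence in $X$ which is $0d$-semi-Cauchy but not $0d$-Cauchy, and let $Q$ be a denumerable subset of $(0,\infty)$. Then there exist $\varepsilon\in(0,\infty)\setminus Q$, an index $j(\varepsilon)\in\mathbb{N}$, and two sequences of natural numbers $(m(j);j\ge 0)$, $(n(j);j\ge 0)$ such that: (i) $j\le m(j)<n(j)$ and $d(x_{m(j)},x_{n(j)})\ge\varepsilon$ for all $j\ge 0$; (ii) $n(j)-m(j)\ge 2$ and $d(x_{m(j)},x_{n(j)-1})<\varepsilon$ for all $j\ge j(\varepsilon)$; (iii) $\lim_{j\to\infty} d(x_{m(j)+p},x_{n(j)+q})=\varepsilon$ for all $p,q\in\{0,1\}$.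
   Context: A symmetric on $X$ is a map $d:X\times X\to[0,\infty)$ with $d(x,y)=d(y,x)$ for all $x,y\in X$. It is triangular if $d(x,z)\le d(x,y)+d(y,z)$ for all $x,y,z\in X$. A sequence $(x_n)$ in $X$ is $0d$-Cauchy if for every $\varepsilon>0$ there is $j$ such that $j\le m<n$ implies $d(x_m,x_n)<\varepsilon$; it is $0d$-semi-Cauchy if $d(x_n,x_{n+1})\to 0$ as $n\to\infty$. "Denumerable" means countable. *)

theory Defs
  imports "HOL-Analysis.Analysis"
begin

definition symmetric_on :: "'a set \<Rightarrow> ('a \<Rightarrow> 'a \<Rightarrow> real) \<Rightarrow> bool" where
  "symmetric_on X d \<longleftrightarrow> (\<forall>x\<in>X. \<forall>y\<in>X. d x y \<ge> 0 \<and> d x y = d y x)"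

definition triangular_on :: "'a set \<Rightarrow> ('a \<Rightarrow> 'a \<Rightarrow> real) \<Rightarrow> bool" where
  "triangular_on X d \<longleftrightarrow> (\<forall>x\<in>X. \<forall>y\<in>X. \<forall>z\<in>X. d x z \<le> d x y + d y z)"

definition zero_d_Cauchy :: "('a \<Rightarrow> 'a \<Rightarrow> real) \<Rightarrow> (nat \<Rightarrow> 'a) \<Rightarrow> bool" where
  "zero_d_Cauchy d x \<longleftrightarrow> (\<forall>\<epsilon>>0. \<exists>j. \<forall>m n. j \<le> m \<and> m < n \<longrightarrow> d (x m) (x n) < \<epsilon>)"

definition zero_d_semi_Cauchy :: "('a \<Rightarrow> 'a \<Rightarrow> real) \<Rightarrow> (nat \<Rightarrow> 'a) \<Rightarrow> bool" where
  "zero_d_semi_Cauchy d x \<longleftrightarrow> ((\<lambda>n. d (x n) (x (Suc n))) \<longlonglongrightarrow> 0)"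

end

theory Submission
  imports Defs
begin

lemma comp_ge_lim:
  fixes s :: "nat \<Rightarrow> real"
  assumes "s \<longlonglongrightarrow> 0" and "\<And>j. j \<le> g j"
  shows "(\<lambda>j. s (g j)) \<longlonglongrightarrow> 0"
proof -
  have "filterlim g at_top sequentially"
    by (rule filterlim_at_top_mono[OF filterlim_ident]) (use assms(2) in auto)
  from filterlim_compose[OF assms(1) this] show ?thesis by (simp add: o_def)
qed

theorem lemma1:
  fixes X :: "'a set" and d :: "'a \<Rightarrow> 'a \<Rightarrow> real" and x :: "nat \<Rightarrow> 'a" and Q :: "real set"
  assumes "X \<noteq> {}"
    and "symmetric_on X d" and "triangular_on X d"
    and "\<forall>n. x n \<in> X"
    and "zero_d_semi_Cauchy d x" and "\<not> zero_d_Cauchy d x"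
    and "countable Q" and "Q \<subseteq> {0<..}"
  shows "\<exists>\<epsilon> j\<epsilon> (m :: nat \<Rightarrow> nat) (n :: nat \<Rightarrow> nat).
           \<epsilon> \<in> {0<..} - Q \<and>
           (\<forall>j. j \<le> m j \<and> m j < n j \<and> d (x (m j)) (x (n j)) \<ge> \<epsilon>) \<and>
           (\<forall>j\<ge>j\<epsilon>. n j - m j \<ge> 2 \<and> d (x (m j)) (x (n j - 1)) < \<epsilon>) \<and>
           (\<forall>p\<in>{0,1}. \<forall>q\<in>{0,1}. (\<lambda>j. d (x (m j + p)) (x (n j + q))) \<longlonglongrightarrow> \<epsilon>)"
proof -
  have sym: "\<And>i k. d (x i) (x k) = d (x k) (x i)" and nn: "\<And>i k. d (x i) (x k) \<ge> 0"
    using assms(2,4) unfolding symmetric_on_def by auto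
  have tri: "\<And>i k l. d (x i) (x l) \<le> d (x i) (x k) + d (x k) (x l)"
    using assms(3,4) unfolding triangular_on_def by auto
  define s where "s k = d (x k) (x (Suc k))" for k
  have slim: "s \<longlonglongrightarrow> 0" using assms(5) unfolding zero_d_semi_Cauchy_def s_def by simp
  obtain e0 where e0: "e0 > 0" "\<And>j. \<exists>m n. j \<le> m \<and> m < n \<and> d (x m) (x n) \<ge> e0"
    using assms(6) unfolding zero_d_Cauchy_def by (auto simp: not_less)
  have "uncountable {0<..<e0}" using e0(1) by (simp add: uncountable_open_interval)
  then have "{0<..<e0} - Q \<noteq> {}" using assms(7) by (metis countable_subset Diff_eq_empty_iff)
  then obtain \<epsilon> where ep: "\<epsilon> \<in> {0<..<e0}" "\<epsilon> \<notin> Q" by blast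
  have ex: "\<exists>m. j \<le> m \<and> (\<exists>n. m < n \<and> d (x m) (x n) \<ge> \<epsilon>)" for j
    using e0(2)[of j] ep(1) by force
  define M where "M j = (SOME m. j \<le> m \<and> (\<exists>n. m < n \<and> d (x m) (x n) \<ge> \<epsilon>))" for j
  have M: "j \<le> M j" "\<exists>n. M j < n \<and> d (x (M j)) (x n) \<ge> \<epsilon>" for j
    using someI_ex[OF ex[of j]] unfolding M_def by auto
  define N where "N j = (LEAST n. M j < n \<and> d (x (M j)) (x n) \<ge> \<epsilon>)" for j
  have N: "M j < N j" "d (x (M j)) (x (N j)) \<ge> \<epsilon>" for j
    using LeastI_ex[OF M(2)[of j]] unfolding N_def by auto
  have Nmin: "\<And>k. M j < k \<Longrightarrow> k < N j \<Longrightarrow> d (x (M j)) (x k) < \<epsilon>" for j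
    using not_less_Least unfolding N_def by (metis not_less)
  from slim ep(1) have "eventually (\<lambda>k. s k < \<epsilon>) sequentially"
    by (auto dest: order_tendstoD(2))
  then obtain J where J: "\<And>k. k \<ge> J \<Longrightarrow> s k < \<epsilon>" by (auto simp: eventually_sequentially)
  have ii: "N j - M j \<ge> 2 \<and> d (x (M j)) (x (N j - 1)) < \<epsilon>" if "j \<ge> J" for j
  proof -
    have "s (M j) < \<epsilon>" using J M(1)[of j] that by simp
    then have "N j \<noteq> Suc (M j)" using N(2)[of j] unfolding s_def by auto
    then have "N j \<ge> M j + 2" using N(1)[of j] by simp
    then show ?thesis using Nmin[of j "N j - 1"] by simp
  qed
  define D where "D j = d (x (M j)) (x (N j))" for j
  have sN1: "(\<lambda>j. s (N j - 1)) \<longlonglongrightarrow> 0"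
  proof (rule comp_ge_lim[OF slim])
    fix j show "j \<le> N j - 1" using M(1)[of j] N(1)[of j] by linarith
  qed
  have sM: "(\<lambda>j. s (M j)) \<longlonglongrightarrow> 0" by (rule comp_ge_lim[OF slim]) (use M(1) in auto)
  have sN: "(\<lambda>j. s (N j)) \<longlonglongrightarrow> 0"
  proof (rule comp_ge_lim[OF slim])
    fix j show "j \<le> N j" using M(1)[of j] N(1)[of j] by linarith
  qed
  have Dlim: "D \<longlonglongrightarrow> \<epsilon>"
  proof (rule tendsto_sandwich[of "\<lambda>j. \<epsilon>" D sequentially "\<lambda>j. \<epsilon> + s (N j - 1)"])
    show "eventually (\<lambda>j. \<epsilon> \<le> D j) sequentially" using N(2) by (simp add: D_def)
    have "D j \<le> \<epsilon> + s (N j - 1)" if "j \<ge> J" for j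
    proof -
      have "N j - 1 \<ge> M j" "Suc (N j - 1) = N j" using ii[OF that] by auto
      then have "D j \<le> d (x (M j)) (x (N j - 1)) + s (N j - 1)"
        unfolding D_def s_def using tri[of "M j" "N j" "N j - 1"] by simp
      then show ?thesis using ii[OF that] by simp
    qed
    then show "eventually (\<lambda>j. D j \<le> \<epsilon> + s (N j - 1)) sequentially"
      by (auto simp: eventually_sequentially)
    show "(\<lambda>j. \<epsilon>) \<longlonglongrightarrow> \<epsilon>" by simp
    show "(\<lambda>j. \<epsilon> + s (N j - 1)) \<longlonglongrightarrow> \<epsilon>" using tendsto_add[OF tendsto_const sN1, of \<epsilon>] by simp
  qed
  have dif: "\<bar>d (x i) (x l) - d (x k) (x l)\<bar> \<le> d (x i) (x k)" for i k l
  proof -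
    have "d (x i) (x l) \<le> d (x i) (x k) + d (x k) (x l)" "d (x k) (x l) \<le> d (x k) (x i) + d (x i) (x l)"
      using tri by blast+
    then show ?thesis using sym[of i k] by linarith
  qed
  have dif2: "\<bar>d (x l) (x i) - d (x l) (x k)\<bar> \<le> d (x i) (x k)" for i k l
    using dif[where i=i and k=k and l=l] sym[of l i] sym[of l k] by simp
  have step: "\<bar>d (x i) (x (k + p)) - d (x i) (x k)\<bar> \<le> s k" "\<bar>d (x (k + p)) (x i) - d (x k) (x i)\<bar> \<le> s k"
    if "p \<in> {0,1}" for i k p
    using that dif[where i="k+p" and k=k and l=i] dif2[where i="k+p" and k=k and l=i] sym[of "Suc k" k] nn[of k "Suc k"]
    by (auto simp: s_def)
  have iii: "(\<lambda>j. d (x (M j + p)) (x (N j + q))) \<longlonglongrightarrow> \<epsilon>" if pq: "p \<in> {0,1}" "q \<in> {0,1}" for p q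
  proof -
    have b: "\<bar>d (x (M j + p)) (x (N j + q)) - D j\<bar> \<le> s (M j) + s (N j)" for j
      using step(2)[OF pq(1), where i="N j + q" and k="M j"] step(1)[OF pq(2), where i="M j" and k="N j"]
      unfolding D_def by linarith
    have "(\<lambda>j. d (x (M j + p)) (x (N j + q)) - D j) \<longlonglongrightarrow> 0"
    proof (rule tendsto_sandwich[of "\<lambda>j. - (s (M j) + s (N j))" _ sequentially "\<lambda>j. s (M j) + s (N j)"])
      show "eventually (\<lambda>j. - (s (M j) + s (N j)) \<le> d (x (M j + p)) (x (N j + q)) - D j) sequentially"
        using b by (intro always_eventually allI) (smt (verit))
      show "eventually (\<lambda>j. d (x (M j + p)) (x (N j + q)) - D j \<le> s (M j) + s (N j)) sequentially"
        using b by (intro always_eventually allI) (smt (verit))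
      show "(\<lambda>j. - (s (M j) + s (N j))) \<longlonglongrightarrow> 0" using tendsto_minus[OF tendsto_add[OF sM sN]] by simp
      show "(\<lambda>j. s (M j) + s (N j)) \<longlonglongrightarrow> 0" using tendsto_add[OF sM sN] by simp
    qed
    from tendsto_add[OF this Dlim] show ?thesis by simp
  qed
  show ?thesis
    apply (rule exI[of _ \<epsilon>], rule exI[of _ J], rule exI[of _ M], rule exI[of _ N])
    using ep M(1) N ii iii by auto
qed

end
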